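(* There exist absolute constants $c_1>0$ and $c_2>0$ such that for all integers $d\ge 2$, all integers $n\ge (c_1 d)^{\frac{d-1}{2}}$, and all polytopes $P_n\subset B_2^d$ having $n$ vertices, $$ \mathrm{vol}_d(B_2^d)-\mathrm{vol}_d(P_n)\ \ge\ c_2\, d\, \mathrm{vol}_d(B_2^d)\, n^{-\frac{2}{d-1}} . $$
   Context: $B_2^d$ denotes the closed Euclidean unit ball in $\mathbb{R}^d$ and $\mathrm{vol}_d$ the $d$-dimensional Lebesgue measure. *)

theory Defs
  imports "HOL-Analysis.Analysis" "HOL-Probability.Probability"
begin

text \<open>Points of R^d are modelled as extensional functions in PiE {..<d} (\<lambda>_. UNIV),
  i.e. the space of the product measure below.\<close>

definition Rd :: "nat \<Rightarrow> (nat \<Rightarrow> real) set" where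
  "Rd d = PiE {..<d} (\<lambda>_. UNIV)"

definition lebesgue_d :: "nat \<Rightarrow> (nat \<Rightarrow> real) measure" where
  "lebesgue_d d = Pi\<^sub>M {..<d} (\<lambda>_. lborel)"

definition vol :: "nat \<Rightarrow> (nat \<Rightarrow> real) set \<Rightarrow> real" where
  "vol d S = measure (lebesgue_d d) S"

definition unit_ball :: "nat \<Rightarrow> (nat \<Rightarrow> real) set" where
  "unit_ball d = {x \<in> Rd d. (\<Sum>i<d. (x i)\<^sup>2) \<le> 1}"

definition conv_hull :: "nat \<Rightarrow> (nat \<Rightarrow> real) set \<Rightarrow> (nat \<Rightarrow> real) set" where
  "conv_hull d V = {x \<in> Rd d. \<exists>w. (\<forall>v\<in>V. 0 \<le> w v) \<and> (\<Sum>v\<in>V. w v) = 1 \<and>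
       (\<forall>i<d. x i = (\<Sum>v\<in>V. w v * v i))}"

text \<open>P is a polytope in R^d with exactly n vertices: the convex hull of a finite set V
  of n points none of which lies in the convex hull of the others (so V is the vertex set).\<close>
definition polytope_n_vertices :: "nat \<Rightarrow> (nat \<Rightarrow> real) set \<Rightarrow> nat \<Rightarrow> bool" where
  "polytope_n_vertices d P n \<longleftrightarrow> (\<exists>V. finite V \<and> card V = n \<and> V \<subseteq> Rd d \<and>
       P = conv_hull d V \<and> (\<forall>v\<in>V. v \<notin> conv_hull d (V - {v})))"

end

theory Submission
  imports Defs
begin


abbreviation MM :: "nat set \<Rightarrow> (nat \<Rightarrow> real) measure" where
  "MM I \<equiv> Pi\<^sub>M I (\<lambda>_. lborel)"

lemma PiM_translate:
  assumes "finite I" and "f \<in> borel_measurable (MM I)"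
  shows "(\<integral>\<^sup>+x. f x \<partial>MM I) = (\<integral>\<^sup>+x. f (\<lambda>i\<in>I. x i + a i) \<partial>MM I)"
  using assms
proof (induction I arbitrary: f rule: finite_induct)
  case empty
  show ?case
    by (rule nn_integral_cong) (auto simp: space_PiM)
next
  case (insert i I f)
  interpret product_sigma_finite "\<lambda>_. lborel" by standard
  note [measurable] = insert.prems
  have "(\<integral>\<^sup>+x. f x \<partial>MM (insert i I)) = (\<integral>\<^sup>+ x. (\<integral>\<^sup>+ y. f (x(i := y)) \<partial>lborel) \<partial>MM I)"
    by (rule product_nn_integral_insert) (use insert in auto)
  also have "\<dots> = (\<integral>\<^sup>+ x. (\<integral>\<^sup>+ y. f (x(i := a i + 1 * y)) \<partial>lborel) \<partial>MM I)"
  proof (rule nn_integral_cong)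
    fix x assume x: "x \<in> space (MM I)"
    have m: "(\<lambda>y. f (x(i := y))) \<in> borel_measurable borel"
      using measurable_comp[OF measurable_component_update insert.prems, OF x \<open>i \<notin> I\<close>]
      unfolding comp_def by simp
    show "(\<integral>\<^sup>+ y. f (x(i := y)) \<partial>lborel) = (\<integral>\<^sup>+ y. f (x(i := a i + 1 * y)) \<partial>lborel)"
      using nn_integral_real_affine[OF m, of 1 "a i"] by simp
  qed
  also have "\<dots> = (\<integral>\<^sup>+ x. (\<lambda>x. \<integral>\<^sup>+ y. f (x(i := a i + 1 * y)) \<partial>lborel) (\<lambda>k\<in>I. x k + a k) \<partial>MM I)"
  proof (rule insert.IH)
    show "(\<lambda>x. \<integral>\<^sup>+ y. f (x(i := a i + 1 * y)) \<partial>lborel) \<in> borel_measurable (MM I)"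
      using \<open>i \<notin> I\<close> by measurable
  qed
  also have "\<dots> = (\<integral>\<^sup>+ x. (\<integral>\<^sup>+ y. f (\<lambda>k\<in>insert i I. (x(i:=y)) k + a k) \<partial>lborel) \<partial>MM I)"
    by (intro nn_integral_cong arg_cong[where f=f] ext) (auto simp: restrict_def)
  also have "\<dots> = (\<integral>\<^sup>+x. f (\<lambda>k\<in>insert i I. x k + a k) \<partial>MM (insert i I))"
    by (rule product_nn_integral_insert[symmetric]) (use insert in auto)
  finally show ?case .
qed



lemma sets_ball: "finite A \<Longrightarrow> {x \<in> space (MM A). (\<Sum>i\<in>A. (x i - c i)^2) \<le> R} \<in> sets (MM A)"
  by measurable

lemma ball_vol:
  assumes "finite A" "r > 0"
  shows "emeasure (MM A) {x \<in> space (MM A). (\<Sum>i\<in>A. (x i - c i)^2) \<le> r^2}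
     = ennreal (unit_ball_vol (card A) * r ^ card A)"
proof -
  let ?S = "{x \<in> space (MM A). (\<Sum>i\<in>A. (x i - c i)^2) \<le> r^2}"
  have S: "?S \<in> sets (MM A)" using sets_ball[OF assms(1)] .
  have "emeasure (MM A) ?S = (\<integral>\<^sup>+x. indicator ?S x \<partial>MM A)"
    using S by simp
  also have "\<dots> = (\<integral>\<^sup>+x. indicator ?S (\<lambda>i\<in>A. x i + c i) \<partial>MM A)"
    by (rule PiM_translate) (use assms S in auto)
  also have "\<dots> = (\<integral>\<^sup>+x. indicator ({f. sqrt (\<Sum>i\<in>A. (f i)\<^sup>2) \<le> r} \<inter> space (MM A)) x \<partial>MM A)"
  proof (rule nn_integral_cong)
    fix x assume x: "x \<in> space (MM A)"
    have "(\<Sum>i\<in>A. ((\<lambda>i\<in>A. x i + c i) i - c i)^2) = (\<Sum>i\<in>A. (x i)^2)"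
      by (rule sum.cong) auto
    moreover have "(\<lambda>i\<in>A. x i + c i) \<in> space (MM A)" by (simp add: space_PiM)
    moreover have "sqrt (\<Sum>i\<in>A. (x i)\<^sup>2) \<le> r \<longleftrightarrow> (\<Sum>i\<in>A. (x i)\<^sup>2) \<le> r^2"
      using assms(2) by (simp add: real_sqrt_le_iff' sum_nonneg)
    ultimately show "indicator ?S (\<lambda>i\<in>A. x i + c i) = (indicator ({f. sqrt (\<Sum>i\<in>A. (f i)\<^sup>2) \<le> r} \<inter> space (MM A)) x :: ennreal)"
      using x by (simp add: indicator_def)
  qed
  also have "\<dots> = emeasure (MM A) ({f. sqrt (\<Sum>i\<in>A. (f i)\<^sup>2) \<le> r} \<inter> space (MM A))"
    by (rule nn_integral_indicator) (use assms in measurable)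
  also have "\<dots> = ennreal (unit_ball_vol (card A) * r ^ card A)"
    by (rule emeasure_cball_aux) (use assms in auto)
  finally show ?thesis .
qed



lemma fubini_split:
  assumes "finite I" "j \<in> I" "A \<in> sets (MM I)"
  shows "emeasure (MM I) A = (\<integral>\<^sup>+y. (\<integral>\<^sup>+t. indicator A (y(j:=t)) \<partial>lborel) \<partial>MM (I - {j}))"
proof -
  interpret product_sigma_finite "\<lambda>_. lborel" by standard
  have I: "I = insert j (I - {j})" using assms by auto
  have "emeasure (MM I) A = (\<integral>\<^sup>+x. indicator A x \<partial>MM I)" using assms by simp
  also have "\<dots> = (\<integral>\<^sup>+x. indicator A x \<partial>MM (insert j (I - {j})))" using I by simp
  also have "\<dots> = (\<integral>\<^sup>+y. (\<integral>\<^sup>+t. indicator A (y(j:=t)) \<partial>lborel) \<partial>MM (I - {j}))"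
    by (rule product_nn_integral_insert) (use assms I in auto)
  finally show ?thesis .
qed

lemma sqrt_pow_half:
  assumes d: "d \<ge> 2"
  shows "sqrt (1 - 1 / real d ^ 2) ^ (d - 1) \<ge> 1/2"
proof -
  have d1: "real d \<ge> 2" using d by simp
  have y: "0 \<le> 1 - 1 / real d ^ 2" "1 - 1 / real d ^ 2 \<le> 1" using d1 by (auto simp: field_simps)
  have "sqrt (1 - 1 / real d ^ 2) \<ge> 1 - 1 / real d ^ 2"
  proof -
    have gen: "z \<le> sqrt z" if "0 \<le> z" "z \<le> 1" for z :: real
    proof -
      have "sqrt z * sqrt z \<le> sqrt z" using that by (intro mult_left_le) auto
      thus ?thesis using that by simp
    qed
    show ?thesis using gen y by blast
  qed
  hence "sqrt (1 - 1 / real d ^ 2) ^ (d - 1) \<ge> (1 - 1 / real d ^ 2) ^ (d - 1)"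
    using y by (intro power_mono) auto
  moreover have "(1 - 1 / real d ^ 2) ^ (d - 1) \<ge> 1 + real (d - 1) * (- (1 / real d ^ 2))"
    using Bernoulli_inequality[of "- (1 / real d ^ 2)" "d - 1"] d1 by (simp add: field_simps)
  moreover have "1 + real (d - 1) * (- (1 / real d ^ 2)) \<ge> 1/2"
  proof -
    have "real d * real d \<ge> 2 * real d" using d1 by (intro mult_right_mono) auto
    hence "real d * 2 \<le> 2 + real d * real d" by linarith
    thus ?thesis using d1 d by (simp add: field_simps of_nat_diff power2_eq_square)
  qed
  ultimately show ?thesis by linarith
qed



lemma ball_vol0:
  assumes "finite A" "r > 0"
  shows "emeasure (MM A) {x \<in> space (MM A). (\<Sum>i\<in>A. (x i)^2) \<le> r^2}
     = ennreal (unit_ball_vol (card A) * r ^ card A)"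
  using ball_vol[OF assms, of "\<lambda>_. 0"] by simp

lemma ubv_ratio:
  assumes d: "d \<ge> 2"
  shows "unit_ball_vol (real (d - 1)) \<le> real d * unit_ball_vol (real d)"
proof -
  define I where "I = {..<d}"
  define J where "J = I - {0}"
  define r where "r = sqrt (1 - 1 / real d ^ 2)"
  have d1: "real d \<ge> 2" using d by simp
  have r2: "r^2 = 1 - 1 / real d ^ 2" unfolding r_def using d1 by (simp add: field_simps)
  have rpos: "r > 0" unfolding r_def using d1 by (simp add: field_simps)
  have I0: "0 \<in> I" "finite I" using d unfolding I_def by auto
  have J: "finite J" "0 \<notin> J" "insert 0 J = I" "card J = d - 1" using I0 unfolding J_def I_def by auto
  define F where "F = {x \<in> space (MM I). \<bar>x 0\<bar> \<le> 1 / real d \<and> (\<Sum>i\<in>J. (x i)^2) \<le> r^2}"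
  define BJ where "BJ = {y \<in> space (MM J). (\<Sum>i\<in>J. (y i)^2) \<le> r^2}"
  have Fs: "F \<in> sets (MM I)" unfolding F_def using I0 J by measurable (auto simp: J_def)
  have BJs: "BJ \<in> sets (MM J)" unfolding BJ_def using J by measurable
  have "emeasure (MM I) F = (\<integral>\<^sup>+y. (\<integral>\<^sup>+t. indicator F (y(0:=t)) \<partial>lborel) \<partial>MM J)"
    unfolding J_def by (rule fubini_split[OF I0(2) I0(1) Fs])
  also have "\<dots> = (\<integral>\<^sup>+y. ennreal (2 / real d) * indicator BJ y \<partial>MM J)"
  proof (rule nn_integral_cong)
    fix y assume y: "y \<in> space (MM J)"
    have sp: "y(0:=t) \<in> space (MM I)" for t
      using y J by (auto simp: space_PiM PiE_def extensional_def)
    have sm: "(\<Sum>i\<in>J. ((y(0:=t)) i)^2) = (\<Sum>i\<in>J. (y i)^2)" for t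
      using J by (intro sum.cong) auto
    have "(\<integral>\<^sup>+t. indicator F (y(0:=t)) \<partial>lborel) = (\<integral>\<^sup>+t. indicator BJ y * indicator {-1/real d..1/real d} t \<partial>lborel)"
      by (intro nn_integral_cong) (use sp sm y in \<open>auto simp: F_def BJ_def indicator_def abs_le_iff\<close>)
    also have "\<dots> = indicator BJ y * emeasure lborel {-1/real d..1/real d}"
      by (subst nn_integral_cmult) auto
    also have "\<dots> = ennreal (2 / real d) * indicator BJ y" using d1 by (simp add: mult.commute)
    finally show "(\<integral>\<^sup>+t. indicator F (y(0:=t)) \<partial>lborel) = ennreal (2 / real d) * indicator BJ y" .
  qed
  also have "\<dots> = ennreal (2 / real d) * emeasure (MM J) BJ"
    using BJs by (subst nn_integral_cmult) auto
  also have "emeasure (MM J) BJ = ennreal (unit_ball_vol (real (d - 1)) * r ^ (d - 1))"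
    unfolding BJ_def using ball_vol0[OF J(1) rpos] J by simp
  finally have eF0: "emeasure (MM I) F = ennreal (2 / real d) * ennreal (unit_ball_vol (real (d - 1)) * r ^ (d - 1))" .
  have eF: "emeasure (MM I) F = ennreal (2 / real d * (unit_ball_vol (real (d - 1)) * r ^ (d - 1)))"
    unfolding eF0 using d1 rpos by (intro ennreal_mult[symmetric]) auto
  define B0 where "B0 = {x \<in> space (MM I). (\<Sum>i\<in>I. (x i)^2) \<le> 1^2}"
  have eB: "emeasure (MM I) B0 = ennreal (unit_ball_vol (real d))"
    unfolding B0_def using ball_vol0[OF I0(2), of 1] by (simp add: I_def)
  have B0s: "B0 \<in> sets (MM I)" unfolding B0_def using I0 by measurable
  have "F \<subseteq> B0"
  proof
    fix x assume x: "x \<in> F"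
    have "(\<Sum>i\<in>I. (x i)^2) = (x 0)^2 + (\<Sum>i\<in>J. (x i)^2)"
      using J by (metis sum.insert)
    also have "(x 0)^2 \<le> (1 / real d)^2"
    proof -
      have "\<bar>x 0\<bar> \<le> 1 / real d" using x unfolding F_def by simp
      hence "\<bar>x 0\<bar>^2 \<le> (1 / real d)^2" by (intro power_mono) auto
      thus ?thesis by simp
    qed
    finally have "(\<Sum>i\<in>I. (x i)^2) \<le> (1 / real d)^2 + r^2" using x unfolding F_def by simp
    thus "x \<in> B0" using x r2 unfolding B0_def F_def by (simp add: power_divide)
  qed
  hence "emeasure (MM I) F \<le> emeasure (MM I) B0" by (rule emeasure_mono) (use B0s in auto)
  hence le: "2 / real d * (unit_ball_vol (real (d - 1)) * r ^ (d - 1)) \<le> unit_ball_vol (real d)"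
    using eF eB by (simp add: ennreal_le_iff)
  have "r ^ (d - 1) \<ge> 1/2" unfolding r_def by (rule sqrt_pow_half[OF d])
  hence "unit_ball_vol (real (d - 1)) * (1/2) \<le> unit_ball_vol (real (d - 1)) * r ^ (d - 1)"
    by (intro mult_left_mono) auto
  hence "2 / real d * (unit_ball_vol (real (d - 1)) * (1/2)) \<le> unit_ball_vol (real d)"
    using le d1 by (meson divide_nonneg_nonneg le_less_trans mult_left_mono not_le of_nat_0_le_iff zero_le_numeral)
  thus ?thesis using d1 by (simp add: field_simps)
qed



lemma sum_sq_diff:
  fixes x v :: "nat \<Rightarrow> real"
  shows "(\<Sum>i\<in>A. (x i - v i)^2) = (\<Sum>i\<in>A. (x i)^2) - 2 * (\<Sum>i\<in>A. x i * v i) + (\<Sum>i\<in>A. (v i)^2)"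
  by (simp add: power2_diff sum.distrib sum_subtractf sum_distrib_left mult.assoc)

lemma interval_measure:
  fixes a s h :: real
  assumes "a \<noteq> 0" "h > 0"
  shows "emeasure lborel {t. 1 - h \<le> t * a + s \<and> t * a + s \<le> 1} = ennreal (h / \<bar>a\<bar>)"
proof (cases "a > 0")
  case True
  have "{t. 1 - h \<le> t * a + s \<and> t * a + s \<le> 1} = {(1 - h - s) / a .. (1 - s) / a}"
    using True by (auto simp: field_simps)
  moreover have "(1 - h - s) / a \<le> (1 - s) / a" using True assms by (simp add: divide_right_mono)
  moreover have "(1 - s) / a - (1 - h - s) / a = h / \<bar>a\<bar>" using True by (simp add: field_simps)
  ultimately show ?thesis by simp
next
  case False
  hence a: "a < 0" using assms by simp
  have "{t. 1 - h \<le> t * a + s \<and> t * a + s \<le> 1} = {(1 - s) / a .. (1 - h - s) / a}"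
    using a by (auto simp: field_simps)
  moreover have "(1 - s) / a \<le> (1 - h - s) / a" using a assms by (simp add: divide_right_mono_neg)
  moreover have "(1 - h - s) / a - (1 - s) / a = h / \<bar>a\<bar>" using a by (simp add: field_simps)
  ultimately show ?thesis by simp
qed



lemma cap_bound:
  assumes d: "d \<ge> 2" and h: "0 < h" "h \<le> 1/4" and v: "(\<Sum>i<d. (v i)^2) \<le> 1"
  shows "measure (MM {..<d}) {x \<in> space (MM {..<d}). (\<Sum>i<d. (x i)^2) \<le> 1 \<and> 1 - h \<le> (\<Sum>i<d. x i * v i)}
     \<le> 2 * real d ^ 2 * h * sqrt (2*h) ^ (d-1) * unit_ball_vol (real d)"
proof -
  define I where "I = {..<d}"
  define C where "C = {x \<in> space (MM {..<d}). (\<Sum>i<d. (x i)^2) \<le> 1 \<and> 1 - h \<le> (\<Sum>i<d. x i * v i)}"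
  have d1: "real d \<ge> 2" using d by simp
  have ubv: "unit_ball_vol (real d) \<ge> 0" "unit_ball_vol (real (d - 1)) \<ge> 0" by auto
  have RHS: "0 \<le> 2 * real d ^ 2 * h * sqrt (2*h) ^ (d-1) * unit_ball_vol (real d)"
    using h ubv by simp
  show ?thesis
  proof (cases "C = {}")
    case True
    hence "measure (MM {..<d}) C = 0" by simp
    thus ?thesis using RHS unfolding C_def by linarith
  next
    case False
    then obtain x0 where x0: "x0 \<in> C" by auto
    have key: "(\<Sum>i<d. (x i - v i)^2) \<le> 2 * h \<and> (\<Sum>i<d. x i * v i) \<le> 1 \<and> 1 - 2 * h \<le> (\<Sum>i<d. (v i)^2)"
      if "x \<in> C" for x
    proof -
      have a: "(\<Sum>i<d. (x i)^2) \<le> 1" "1 - h \<le> (\<Sum>i<d. x i * v i)" using that unfolding C_def by auto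
      have nn: "0 \<le> (\<Sum>i<d. (x i - v i)^2)" by (intro sum_nonneg) auto
      show ?thesis using sum_sq_diff[of x v "{..<d}"] a v nn by linarith
    qed
    have vbig: "1/2 \<le> (\<Sum>i<d. (v i)^2)" using key[OF x0] h by linarith
    define m where "m = Max ((\<lambda>i. (v i)^2) ` {..<d})"
    have "m \<in> (\<lambda>i. (v i)^2) ` {..<d}" unfolding m_def using d by (intro Max_in) (auto simp: lessThan_empty_iff)
    then obtain j where j: "j < d" "(v j)^2 = m" by auto
    have vle: "(v i)^2 \<le> (v j)^2" if "i < d" for i
    proof -
      have "(v i)^2 \<le> m" unfolding m_def using that by (intro Max_ge) auto
      thus ?thesis using j by simp
    qed
    have "(\<Sum>i<d. (v i)^2) \<le> real (card {..<d}) * (v j)^2"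
      by (rule sum_bounded_above) (use vle in auto)
    hence "1/2 \<le> real d * (v j)^2" using vbig by simp
    hence vj2: "(1 / (2 * real d))^2 \<le> (v j)^2"
    proof -
      assume a: "1/2 \<le> real d * (v j)^2"
      have "(1 / (2 * real d))^2 = 1 / (4 * real d ^ 2)" by (simp add: power2_eq_square)
      also have "\<dots> \<le> 1 / (2 * real d)" using d1 by (simp add: field_simps power2_eq_square)
      also have "\<dots> \<le> (v j)^2" using a d1 by (simp add: field_simps)
      finally show ?thesis .
    qed
    hence vj: "1 / (2 * real d) \<le> \<bar>v j\<bar>"
      using abs_le_square_iff[of "1 / (2 * real d)" "v j"] d1 by simp
    hence vj0: "v j \<noteq> 0" using d1 by auto
    have inv: "h / \<bar>v j\<bar> \<le> 2 * real d * h"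
    proof -
      have "h / \<bar>v j\<bar> \<le> h / (1 / (2 * real d))"
        using vj vj0 h d1 by (intro divide_left_mono) (auto intro!: divide_pos_pos)
      thus ?thesis by (simp add: mult.commute)
    qed
    define J where "J = I - {j}"
    have I0: "j \<in> I" "finite I" using j unfolding I_def by auto
    have J: "finite J" "j \<notin> J" "insert j J = I" "card J = d - 1" using I0 unfolding J_def I_def by auto
    define \<rho> where "\<rho> = sqrt (2 * h)"
    have \<rho>: "\<rho> > 0" "\<rho>^2 = 2 * h" unfolding \<rho>_def using h by auto
    define E where "E = {x \<in> space (MM I). (\<Sum>i\<in>J. (x i - v i)^2) \<le> \<rho>^2 \<and>
        1 - h \<le> (\<Sum>i\<in>I. x i * v i) \<and> (\<Sum>i\<in>I. x i * v i) \<le> 1}"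
    define BJ where "BJ = {y \<in> space (MM J). (\<Sum>i\<in>J. (y i - v i)^2) \<le> \<rho>^2}"
    have Es: "E \<in> sets (MM I)" unfolding E_def using I0 J by measurable (auto simp: J_def)
    have BJs: "BJ \<in> sets (MM J)" unfolding BJ_def using J by measurable
    have CE: "C \<subseteq> E"
    proof
      fix x assume x: "x \<in> C"
      have "(\<Sum>i\<in>J. (x i - v i)^2) \<le> (\<Sum>i\<in>I. (x i - v i)^2)"
        using J I0 by (intro sum_mono2) auto
      thus "x \<in> E" using key[OF x] x \<rho> unfolding E_def C_def I_def by auto
    qed
    have "emeasure (MM I) E = (\<integral>\<^sup>+y. (\<integral>\<^sup>+t. indicator E (y(j:=t)) \<partial>lborel) \<partial>MM J)"
      unfolding J_def by (rule fubini_split[OF I0(2) I0(1) Es])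
    also have "\<dots> = (\<integral>\<^sup>+y. ennreal (h / \<bar>v j\<bar>) * indicator BJ y \<partial>MM J)"
    proof (rule nn_integral_cong)
      fix y assume y: "y \<in> space (MM J)"
      have sp: "y(j:=t) \<in> space (MM I)" for t
        using y J by (auto simp: space_PiM PiE_def extensional_def)
      have sm: "(\<Sum>i\<in>J. ((y(j:=t)) i - v i)^2) = (\<Sum>i\<in>J. (y i - v i)^2)" for t
        using J by (intro sum.cong) auto
      define s where "s = (\<Sum>i\<in>J. y i * v i)"
      have sm2: "(\<Sum>i\<in>I. (y(j:=t)) i * v i) = t * v j + s" for t
      proof -
        have "(\<Sum>i\<in>I. (y(j:=t)) i * v i) = t * v j + (\<Sum>i\<in>J. (y(j:=t)) i * v i)"
          by (subst J(3)[symmetric], subst sum.insert) (use J in auto)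
        also have "(\<Sum>i\<in>J. (y(j:=t)) i * v i) = s" unfolding s_def using J by (intro sum.cong) auto
        finally show ?thesis .
      qed
      have "(\<integral>\<^sup>+t. indicator E (y(j:=t)) \<partial>lborel) =
          (\<integral>\<^sup>+t. indicator BJ y * indicator {t. 1 - h \<le> t * v j + s \<and> t * v j + s \<le> 1} t \<partial>lborel)"
        by (intro nn_integral_cong) (use sp sm sm2 y in \<open>auto simp: E_def BJ_def indicator_def\<close>)
      also have "\<dots> = indicator BJ y * emeasure lborel {t. 1 - h \<le> t * v j + s \<and> t * v j + s \<le> 1}"
        by (subst nn_integral_cmult) auto
      also have "\<dots> = ennreal (h / \<bar>v j\<bar>) * indicator BJ y"
        using interval_measure[OF vj0 h(1), of s] by (simp add: mult.commute)
      finally show "(\<integral>\<^sup>+t. indicator E (y(j:=t)) \<partial>lborel) = ennreal (h / \<bar>v j\<bar>) * indicator BJ y" .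
    qed
    also have "\<dots> = ennreal (h / \<bar>v j\<bar>) * emeasure (MM J) BJ"
      using BJs by (subst nn_integral_cmult) auto
    also have "emeasure (MM J) BJ = ennreal (unit_ball_vol (real (d - 1)) * \<rho> ^ (d - 1))"
      unfolding BJ_def using ball_vol[OF J(1) \<rho>(1)] J by simp
    finally have eE0: "emeasure (MM I) E = ennreal (h / \<bar>v j\<bar>) * ennreal (unit_ball_vol (real (d - 1)) * \<rho> ^ (d - 1))" .
    have eE: "emeasure (MM I) E = ennreal (h / \<bar>v j\<bar> * (unit_ball_vol (real (d - 1)) * \<rho> ^ (d - 1)))"
      unfolding eE0 using h \<rho> by (intro ennreal_mult[symmetric]) auto
    have Ef: "E \<in> fmeasurable (MM I)" using Es eE by (simp add: fmeasurable_def)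
    have Cs: "C \<in> sets (MM I)" unfolding C_def I_def by measurable
    have "measure (MM I) C \<le> measure (MM I) E" by (rule measure_mono_fmeasurable[OF CE Cs Ef])
    also have "measure (MM I) E = h / \<bar>v j\<bar> * (unit_ball_vol (real (d - 1)) * \<rho> ^ (d - 1))"
      using eE h \<rho> by (simp add: measure_def)
    also have "\<dots> \<le> (2 * real d * h) * (real d * unit_ball_vol (real d) * \<rho> ^ (d - 1))"
      using inv ubv_ratio[OF d] \<rho> h by (intro mult_mono) auto
    also have "\<dots> = 2 * real d ^ 2 * h * sqrt (2*h) ^ (d-1) * unit_ball_vol (real d)"
      unfolding \<rho>_def by (simp add: power2_eq_square)
    finally show ?thesis unfolding C_def I_def .
  qed
qed



lemma shell_bound:
  fixes h :: real
  assumes h: "0 < h" and dh: "real d * h \<le> 1"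
  shows "1 - sqrt (1 - h) ^ d \<ge> real d * h / 4"
proof (cases "d = 0")
  case True thus ?thesis by simp
next
  case False
  hence d1: "real d \<ge> 1" by simp
  have h1: "h \<le> 1" using dh d1 h by (metis mult_le_cancel_right1 order_trans not_le less_imp_le)
  have s: "sqrt (1 - h) \<le> 1 - h/2"
    using h h1 by (subst real_sqrt_le_iff') (auto simp: power2_eq_square field_simps)
  have "sqrt (1 - h) ^ d \<le> (1 - h/2) ^ d" using s h1 by (intro power_mono) auto
  moreover have "(1 - h/2) ^ d * (1 + h/2) ^ d \<le> 1"
  proof -
    have "(1 - h/2) ^ d * (1 + h/2) ^ d = (1 - h^2/4) ^ d"
      by (simp add: power_mult_distrib[symmetric] power2_eq_square field_simps)
    also have "\<dots> \<le> 1" using h h1 mult_le_one[of h h] by (intro power_le_one) (auto simp: power2_eq_square field_simps)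
    finally show ?thesis .
  qed
  moreover have "1 + real d * (h/2) \<le> (1 + h/2) ^ d"
    using Bernoulli_inequality[of "h/2" d] h by simp
  ultimately have "sqrt (1 - h) ^ d * (1 + real d * (h/2)) \<le> 1"
  proof -
    assume a: "sqrt (1 - h) ^ d \<le> (1 - h/2) ^ d" and b: "(1 - h/2) ^ d * (1 + h/2) ^ d \<le> 1"
      and c: "1 + real d * (h/2) \<le> (1 + h/2) ^ d"
    have "sqrt (1 - h) ^ d * (1 + real d * (h/2)) \<le> sqrt (1 - h) ^ d * (1 + h/2) ^ d"
      using c h1 by (intro mult_left_mono) auto
    also have "\<dots> \<le> (1 - h/2) ^ d * (1 + h/2) ^ d"
      using a h by (intro mult_right_mono) auto
    finally show ?thesis using b by linarith
  qed
  moreover have pos: "0 < 1 + real d * (h/2)" using h by (simp add: add_pos_nonneg)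
  ultimately have "sqrt (1 - h) ^ d \<le> 1 / (1 + real d * (h/2))"
    by (simp add: le_divide_eq)
  moreover have "1 / (1 + real d * (h/2)) \<le> 1 - real d * h / 4"
  proof -
    define y where "y = real d * h"
    have y: "0 \<le> y" "y \<le> 1" using dh h unfolding y_def by auto
    have yy: "y * y \<le> y" using y by (intro mult_left_le) auto
    have e: "(1 - y/4) * (1 + y/2) = 1 + y/4 - y*y/8" by (simp add: algebra_simps)
    have "1 \<le> (1 - y/4) * (1 + y/2)" unfolding e using yy y by linarith
    hence "1 / (1 + y/2) \<le> 1 - y/4" using y by (simp add: divide_le_eq)
    moreover have "real d * (h/2) = y/2" unfolding y_def by simp
    ultimately show ?thesis unfolding y_def by simp
  qed
  ultimately show ?thesis by linarith
qed

lemma exp_bound: "d \<ge> 2 \<Longrightarrow> 16 * real d \<le> 64 ^ (d - 1)"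
proof (induction d rule: dec_induct)
  case base thus ?case by simp
next
  case (step n)
  have "16 * real (Suc n) \<le> 2 * (16 * real n)" using step by simp
  also have "\<dots> \<le> 64 * 64 ^ (n - 1)" using step by simp
  also have "\<dots> = 64 ^ (Suc n - 1)" using step by (cases n) auto
  finally show ?case .
qed



lemma space_MM: "space (MM I) = PiE I (\<lambda>_. UNIV)"
  by (simp add: space_PiM)

lemma main_bound:
  assumes d: "d \<ge> 2" and n: "real n \<ge> (1 * real d) powr ((real d - 1) / 2)"
    and poly: "polytope_n_vertices d P n" and sub: "P \<subseteq> unit_ball d"
  shows "vol d (unit_ball d) - vol d P \<ge>
      1/65536 * real d * vol d (unit_ball d) * real n powr (- 2 / (real d - 1))"
proof -
  define I where "I = {..<d}"
  obtain V where V: "finite V" "card V = n" "V \<subseteq> Rd d" "P = conv_hull d V"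
    using poly unfolding polytope_n_vertices_def by blast
  have d1: "real d \<ge> 2" using d by simp
  have RdI: "Rd d = space (MM I)" unfolding Rd_def I_def by (simp add: space_MM)
  have volI: "vol d S = measure (MM I) S" for S unfolding vol_def lebesgue_d_def I_def by simp
  have Bdef: "unit_ball d = {x \<in> space (MM I). (\<Sum>i\<in>I. (x i)^2) \<le> 1^2}"
    unfolding unit_ball_def RdI I_def by simp
  have Bs: "unit_ball d \<in> sets (MM I)" unfolding Bdef I_def by measurable
  have eB: "emeasure (MM I) (unit_ball d) = ennreal (unit_ball_vol (real d))"
    unfolding Bdef using ball_vol0[of I 1] by (simp add: I_def)
  have Bf: "unit_ball d \<in> fmeasurable (MM I)" using Bs eB by (simp add: fmeasurable_def)
  have volB: "vol d (unit_ball d) = unit_ball_vol (real d)"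
    unfolding volI using eB by (simp add: measure_def)
  define ub where "ub = unit_ball_vol (real d)"
  have ub0: "ub \<ge> 0" unfolding ub_def by simp
  have Vball: "(\<Sum>i<d. (v i)^2) \<le> 1" if v: "v \<in> V" for v
  proof -
    have "v \<in> conv_hull d V"
      unfolding conv_hull_def
    proof (intro CollectI conjI exI[of _ "\<lambda>u. if u = v then 1 else 0"] allI ballI impI)
      show "v \<in> Rd d" using V v by auto
      show "(\<Sum>u\<in>V. if u = v then 1 else 0) = (1::real)" using V v by simp
      fix i assume "i < d"
      show "v i = (\<Sum>u\<in>V. (if u = v then 1 else 0) * u i)"
      proof -
        have "(\<Sum>u\<in>V. (if u = v then 1 else 0) * u i) = (\<Sum>u\<in>V. if u = v then v i else 0)"
          by (rule sum.cong) auto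
        thus ?thesis using V v by simp
      qed
    qed auto
    hence "v \<in> unit_ball d" using sub V by auto
    thus ?thesis unfolding unit_ball_def by simp
  qed
  have n1: "real n \<ge> 1"
    using n ge_one_powr_ge_zero[of "real d" "(real d - 1)/2"] d1 by simp
  have npos: "real n > 0" using n1 by simp
  define q where "q = real n powr (- 2 / (real d - 1))"
  have qpos: "q > 0" unfolding q_def using npos by simp
  have "real n powr (2 / (real d - 1)) \<ge> ((real d) powr ((real d - 1) / 2)) powr (2 / (real d - 1))"
    using n d1 by (intro powr_mono2) auto
  also have "((real d) powr ((real d - 1) / 2)) powr (2 / (real d - 1)) = real d"
  proof -
    have "(real d - 1) / 2 * (2 / (real d - 1)) = 1" using d1 by (simp add: field_simps)
    thus ?thesis using d1 by (simp only: powr_powr) simp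
  qed
  finally have npd: "real n powr (2 / (real d - 1)) \<ge> real d" .
  have qd: "q \<le> 1 / real d"
  proof -
    have "q = 1 / real n powr (2 / (real d - 1))"
      unfolding q_def by (simp add: powr_minus_divide[symmetric])
    also have "\<dots> \<le> 1 / real d" using npd d1 npos by (intro divide_left_mono) auto
    finally show ?thesis .
  qed
  define h where "h = q / 8192"
  have hpos: "h > 0" unfolding h_def using qpos by simp
  have dh: "real d * h \<le> 1 / 8192"
    unfolding h_def using qd d1 by (simp add: field_simps)
  have h4: "h \<le> 1/4" using dh d1 hpos mult_right_mono[of 1 "real d" h] by linarith
  have sq: "sqrt (2 * h) ^ (d - 1) = 1 / (real n * 64 ^ (d - 1))"
  proof -
    have "sqrt (2 * h) = sqrt q / 64"
      unfolding h_def by (simp add: real_sqrt_divide)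
    moreover have "sqrt q = real n powr (- 1 / (real d - 1))"
    proof -
      have e: "- 2 / (real d - 1) * (1/2) = - 1 / (real d - 1)" by (simp add: field_simps)
      have "sqrt q = q powr (1/2)" using qpos by (simp add: powr_half_sqrt)
      also have "\<dots> = real n powr (- 1 / (real d - 1))" unfolding q_def powr_powr e ..
      finally show ?thesis .
    qed
    moreover have "(real n powr (- 1 / (real d - 1))) ^ (d - 1) = 1 / real n"
    proof -
      have "(real n powr (- 1 / (real d - 1))) ^ (d - 1) = (real n powr (- 1 / (real d - 1))) powr real (d - 1)"
        using npos by (simp add: powr_realpow)
      also have "\<dots> = real n powr (- 1 / (real d - 1) * real (d - 1))" by (simp add: powr_powr)
      also have "- 1 / (real d - 1) * real (d - 1) = -1" using d1 d by (simp add: of_nat_diff)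
      finally show ?thesis using npos by (simp add: powr_minus_divide)
    qed
    ultimately have "sqrt (2 * h) = real n powr (- 1 / (real d - 1)) / 64"
      and p: "(real n powr (- 1 / (real d - 1))) ^ (d - 1) = 1 / real n" by simp_all
    hence "sqrt (2 * h) ^ (d - 1) = (real n powr (- 1 / (real d - 1))) ^ (d - 1) / 64 ^ (d - 1)"
      by (simp only: power_divide)
    thus ?thesis unfolding p by simp
  qed
  define inner where "inner = {x \<in> space (MM I). (\<Sum>i\<in>I. (x i)^2) \<le> sqrt (1 - h)^2}"
  define C where "C v = {x \<in> space (MM {..<d}). (\<Sum>i<d. (x i)^2) \<le> 1 \<and> 1 - h \<le> (\<Sum>i<d. x i * v i)}" for v
  have inners: "inner \<in> sets (MM I)" unfolding inner_def I_def by measurable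
  have Cs: "C v \<in> sets (MM I)" for v unfolding C_def I_def by measurable
  have einner: "measure (MM I) inner = ub * sqrt (1 - h) ^ d"
  proof -
    have "emeasure (MM I) inner = ennreal (ub * sqrt (1 - h) ^ d)"
      unfolding inner_def ub_def using ball_vol0[of I "sqrt (1 - h)"] h4 hpos by (simp add: I_def)
    thus ?thesis using ub0 h4 by (simp add: measure_def)
  qed
  have cover: "P \<subseteq> inner \<union> (\<Union>v\<in>V. C v)"
  proof
    fix x assume xP: "x \<in> P"
    hence xB: "x \<in> unit_ball d" using sub by auto
    from xP obtain w where w: "x \<in> Rd d" "\<forall>v\<in>V. 0 \<le> w v" "(\<Sum>v\<in>V. w v) = 1"
      "\<forall>i<d. x i = (\<Sum>v\<in>V. w v * v i)" using V unfolding conv_hull_def by blast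
    have x1: "(\<Sum>i<d. (x i)^2) \<le> 1" using xB unfolding unit_ball_def by simp
    show "x \<in> inner \<union> (\<Union>v\<in>V. C v)"
    proof (cases "(\<Sum>i<d. (x i)^2) \<le> 1 - h")
      case True
      thus ?thesis using w(1) h4 unfolding inner_def RdI I_def by auto
    next
      case False
      have "\<exists>v\<in>V. 1 - h \<le> (\<Sum>i<d. x i * v i)"
      proof (rule ccontr)
        assume "\<not> ?thesis"
        hence lt: "\<forall>v\<in>V. (\<Sum>i<d. x i * v i) < 1 - h" by auto
        have "(\<Sum>i<d. (x i)^2) = (\<Sum>i<d. x i * (\<Sum>v\<in>V. w v * v i))"
          using w(4) by (intro sum.cong) (auto simp: power2_eq_square)
        also have "\<dots> = (\<Sum>v\<in>V. w v * (\<Sum>i<d. x i * v i))"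
          by (simp add: sum_distrib_left sum_distrib_right sum.swap[of _ V] mult_ac)
        also have "\<dots> \<le> (\<Sum>v\<in>V. w v * (1 - h))"
          using lt w(2) by (intro sum_mono mult_left_mono) auto
        also have "\<dots> = 1 - h" using w(3) by (simp add: sum_distrib_right[symmetric])
        finally show False using False by simp
      qed
      then obtain v where "v \<in> V" "1 - h \<le> (\<Sum>i<d. x i * v i)" by blast
      thus ?thesis using w(1) x1 unfolding C_def RdI I_def by auto
    qed
  qed
  have Us: "inner \<union> (\<Union>v\<in>V. C v) \<in> sets (MM I)" using inners Cs V by auto
  have UB: "inner \<union> (\<Union>v\<in>V. C v) \<subseteq> unit_ball d"
  proof -
    have "inner \<subseteq> unit_ball d" unfolding inner_def Bdef using h4 hpos by auto
    moreover have "C v \<subseteq> unit_ball d" for v unfolding C_def Bdef I_def by auto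
    ultimately show ?thesis by blast
  qed
  have Uf: "inner \<union> (\<Union>v\<in>V. C v) \<in> fmeasurable (MM I)" by (rule fmeasurableI2[OF Bf UB Us])
  have "measure (MM I) P \<le> measure (MM I) (inner \<union> (\<Union>v\<in>V. C v))"
  proof (cases "P \<in> sets (MM I)")
    case True thus ?thesis by (intro measure_mono_fmeasurable[OF cover True Uf])
  next
    case False thus ?thesis by (simp add: measure_notin_sets)
  qed
  also have "\<dots> \<le> measure (MM I) inner + measure (MM I) (\<Union>v\<in>V. C v)"
    by (rule measure_Un_le) (use inners Cs V in auto)
  also have "measure (MM I) (\<Union>v\<in>V. C v) \<le> (\<Sum>v\<in>V. measure (MM I) (C v))"
    by (rule measure_UNION_le) (use Cs V in auto)
  also have "\<dots> \<le> real (card V) * (2 * real d ^ 2 * h * sqrt (2*h) ^ (d-1) * ub)"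
  proof (rule sum_bounded_above)
    fix v assume "v \<in> V"
    show "measure (MM I) (C v) \<le> 2 * real d ^ 2 * h * sqrt (2*h) ^ (d-1) * ub"
      unfolding C_def I_def ub_def by (rule cap_bound[OF d hpos h4 Vball[OF \<open>v \<in> V\<close>]])
  qed
  also have "real (card V) * (2 * real d ^ 2 * h * sqrt (2*h) ^ (d-1) * ub) = ub * (2 * real d ^ 2 * h / 64 ^ (d - 1))"
    using V npos unfolding sq by (simp add: field_simps)
  finally have volP: "vol d P \<le> ub * (sqrt (1 - h) ^ d + 2 * real d ^ 2 * h / 64 ^ (d - 1))"
    unfolding volI einner by (simp add: algebra_simps)
  have s1: "1 - sqrt (1 - h) ^ d \<ge> real d * h / 4"
    using shell_bound[OF hpos] dh by simp
  have s2: "2 * real d ^ 2 * h / 64 ^ (d - 1) \<le> real d * h / 8"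
  proof -
    have "2 * real d ^ 2 * h * 8 = (real d * h) * (16 * real d)" by (simp add: power2_eq_square)
    also have "\<dots> \<le> (real d * h) * 64 ^ (d - 1)"
      using exp_bound[OF d] hpos d1 by (intro mult_left_mono) auto
    finally show ?thesis by (simp add: field_simps)
  qed
  have "1/65536 * real d * vol d (unit_ball d) * real n powr (- 2 / (real d - 1)) = ub * (real d * h / 8)"
    unfolding volB ub_def[symmetric] q_def[symmetric] h_def by simp
  also have "\<dots> \<le> ub * (1 - (sqrt (1 - h) ^ d + 2 * real d ^ 2 * h / 64 ^ (d - 1)))"
    using s1 s2 ub0 by (intro mult_left_mono) auto
  also have "\<dots> \<le> vol d (unit_ball d) - vol d P"
    using volP volB ub_def by (simp add: algebra_simps)
  finally show ?thesis .
qed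

theorem theorem1:
  shows "\<exists>c1>0. \<exists>c2>0. \<forall>d::nat. \<forall>n::nat. \<forall>P.
    d \<ge> 2 \<longrightarrow> real n \<ge> (c1 * real d) powr ((real d - 1) / 2) \<longrightarrow>
    polytope_n_vertices d P n \<longrightarrow> P \<subseteq> unit_ball d \<longrightarrow>
    vol d (unit_ball d) - vol d P \<ge>
      c2 * real d * vol d (unit_ball d) * real n powr (- 2 / (real d - 1))"
  by (rule exI[of _ 1], simp only: zero_less_one simp_thms,
      rule exI[of _ "1/65536"]) (use main_bound in auto)

end
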